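(* Let $Z=\mathrm{GF}(2)$ and let $K$ be an elementary abelian $2$-group, regarded as a vector space over $\mathrm{GF}(2)$ (written additively). Let $g:K^3\to\mathrm{GF}(2)$ be a trilinear form such that $g(x,x+y,y)=g(y,x+y,x)$ for all $x,y\in K$. Define $\theta:K^2\to\mathrm{GF}(2)$ by $\theta(x,y)=g(x,x+y,y)$, and let $Q=K\ltimes_\theta Z$ be the set $K\times Z$ with multiplication $(x,a)(y,b)=(x+y,\ a+b+\theta(x,y))$. Then $Q$ is a commutative A-loop of exponent $2$. Moreover, $(y,b)\in N_\mu(Q)$ if and only if $g(y,x,z)=g(x,z,y)$ for all $x,z\in K$.
   Context: A loop is a set with a binary operation and a neutral element in which all left and right translations are bijections. Its inner mapping group is generated by $L_{x,y}=L_{yx}^{-1}L_yL_x$, $R_{x,y}=R_{xy}^{-1}R_yR_x$, $T_x=L_x^{-1}R_x$; an A-loop is a loop whose inner mappings are all automorphisms. Exponent $2$ means $uu=1$ for all elements $u$. $N_\mu(Q)=\{y:(xy)z=x(yz)\ \forall x,z\}$ is the middle nucleus. *)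

theory Defs
  imports Main "HOL-Library.Z2"
begin

text \<open>Loops on the whole carrier type, with multiplication m and neutral element e.\<close>

definition loop :: "('q \<Rightarrow> 'q \<Rightarrow> 'q) \<Rightarrow> 'q \<Rightarrow> bool" where
  "loop m e \<longleftrightarrow> (\<forall>x. m e x = x \<and> m x e = x) \<and>
     (\<forall>x. bij (\<lambda>y. m x y)) \<and> (\<forall>x. bij (\<lambda>y. m y x))"

definition Lt :: "('q \<Rightarrow> 'q \<Rightarrow> 'q) \<Rightarrow> 'q \<Rightarrow> 'q \<Rightarrow> 'q" where
  "Lt m x = (\<lambda>y. m x y)"

definition Rt :: "('q \<Rightarrow> 'q \<Rightarrow> 'q) \<Rightarrow> 'q \<Rightarrow> 'q \<Rightarrow> 'q" where
  "Rt m x = (\<lambda>y. m y x)"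

definition Lxy :: "('q \<Rightarrow> 'q \<Rightarrow> 'q) \<Rightarrow> 'q \<Rightarrow> 'q \<Rightarrow> 'q \<Rightarrow> 'q" where
  "Lxy m x y = inv (Lt m (m y x)) \<circ> Lt m y \<circ> Lt m x"

definition Rxy :: "('q \<Rightarrow> 'q \<Rightarrow> 'q) \<Rightarrow> 'q \<Rightarrow> 'q \<Rightarrow> 'q \<Rightarrow> 'q" where
  "Rxy m x y = inv (Rt m (m x y)) \<circ> Rt m y \<circ> Rt m x"

definition Tx :: "('q \<Rightarrow> 'q \<Rightarrow> 'q) \<Rightarrow> 'q \<Rightarrow> 'q \<Rightarrow> 'q" where
  "Tx m x = inv (Lt m x) \<circ> Rt m x"

inductive_set inner_mappings :: "('q \<Rightarrow> 'q \<Rightarrow> 'q) \<Rightarrow> ('q \<Rightarrow> 'q) set"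
  for m :: "'q \<Rightarrow> 'q \<Rightarrow> 'q" where
  im_id: "id \<in> inner_mappings m"
| im_L: "Lxy m x y \<in> inner_mappings m"
| im_R: "Rxy m x y \<in> inner_mappings m"
| im_T: "Tx m x \<in> inner_mappings m"
| im_comp: "f \<in> inner_mappings m \<Longrightarrow> h \<in> inner_mappings m \<Longrightarrow> f \<circ> h \<in> inner_mappings m"
| im_inv: "f \<in> inner_mappings m \<Longrightarrow> inv f \<in> inner_mappings m"

definition automorphism :: "('q \<Rightarrow> 'q \<Rightarrow> 'q) \<Rightarrow> ('q \<Rightarrow> 'q) \<Rightarrow> bool" where
  "automorphism m f \<longleftrightarrow> bij f \<and> (\<forall>x y. f (m x y) = m (f x) (f y))"

definition A_loop :: "('q \<Rightarrow> 'q \<Rightarrow> 'q) \<Rightarrow> 'q \<Rightarrow> bool" where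
  "A_loop m e \<longleftrightarrow> loop m e \<and> (\<forall>f \<in> inner_mappings m. automorphism m f)"

definition commutative_op :: "('q \<Rightarrow> 'q \<Rightarrow> 'q) \<Rightarrow> bool" where
  "commutative_op m \<longleftrightarrow> (\<forall>x y. m x y = m y x)"

definition exponent2 :: "('q \<Rightarrow> 'q \<Rightarrow> 'q) \<Rightarrow> 'q \<Rightarrow> bool" where
  "exponent2 m e \<longleftrightarrow> (\<forall>u. m u u = e)"

definition middle_nucleus :: "('q \<Rightarrow> 'q \<Rightarrow> 'q) \<Rightarrow> 'q set" where
  "middle_nucleus m = {y. \<forall>x z. m (m x y) z = m x (m y z)}"

text \<open>Trilinear form K^3 \<rightarrow> GF(2); over GF(2), linearity is additivity.\<close>

definition trilinear :: "('k::ab_group_add \<Rightarrow> 'k \<Rightarrow> 'k \<Rightarrow> bit) \<Rightarrow> bool" where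
  "trilinear g \<longleftrightarrow>
     (\<forall>x x' y z. g (x + x') y z = g x y z + g x' y z) \<and>
     (\<forall>x y y' z. g x (y + y') z = g x y z + g x y' z) \<and>
     (\<forall>x y z z'. g x y (z + z') = g x y z + g x y z')"

definition ext_mult :: "('k::ab_group_add \<Rightarrow> 'k \<Rightarrow> bit) \<Rightarrow> 'k \<times> bit \<Rightarrow> 'k \<times> bit \<Rightarrow> 'k \<times> bit" where
  "ext_mult \<theta> p q = (fst p + fst q, snd p + snd q + \<theta> (fst p) (fst q))"

end

theory Submission imports Defs begin
lemma bit_cancel: "(x::bit) + x = 0" "(x::bit) + (x + y) = y"
  by (cases x; simp del: add_bit_eq_xor)+
lemma bit_eq_sum: "(a::bit) = b \<longleftrightarrow> a + b = 0"
  by (cases a; cases b; simp del: add_bit_eq_xor)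

lemma auto_id: "automorphism m id" by (simp add: automorphism_def)
lemma auto_comp: "automorphism m f \<Longrightarrow> automorphism m h \<Longrightarrow> automorphism m (f \<circ> h)"
  by (simp add: automorphism_def bij_comp)
lemma auto_inv: assumes "automorphism m f" shows "automorphism m (inv f)"
proof -
  have b: "bij f" and h: "\<And>x y. f (m x y) = m (f x) (f y)" using assms by (auto simp: automorphism_def)
  have "inv f (m x y) = m (inv f x) (inv f y)" for x y
  proof -
    have "f (m (inv f x) (inv f y)) = m x y" using h b by (simp add: bij_is_surj surj_f_inv_f)
    then show ?thesis by (rule inv_f_eq[OF bij_is_inj[OF b]])
  qed
  then show ?thesis using b by (simp add: automorphism_def bij_imp_bij_inv)
qed

locale trisetup =
  fixes g :: "'k::ab_group_add \<Rightarrow> 'k \<Rightarrow> 'k \<Rightarrow> bit"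
  assumes elem2: "\<forall>x::'k. x + x = 0"
    and tri: "trilinear g"
    and sym: "\<forall>x y. g x (x + y) y = g y (x + y) x"
begin
definition th where "th x y = g x (x + y) y"

lemma K: "(x::'k) + x = 0" "x + (x + y) = y" "- x = x" "a - b = (a + b::'k)"
proof -
  show a: "(x::'k) + x = 0" for x using elem2 by simp
  show "x + (x + y) = y" by (simp add: add.assoc[symmetric] a)
  show m: "- x = (x::'k)" for x using a[of x] by (rule minus_unique)
  show "a - b = a + b" by (simp add: diff_conv_add_uminus m)
qed

lemma gl: "g (a+b) c d = g a c d + g b c d" "g a (b+c) d = g a b d + g a c d" "g a b (c+d) = g a b c + g a b d"
  using tri unfolding trilinear_def by blast+

lemma g0: "g 0 b c = 0" "g a 0 c = 0" "g a b 0 = 0"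
proof -
  have "g 0 b c = g 0 b c + g 0 b c" using gl(1)[of 0 0] by simp
  then show "g 0 b c = 0" by (simp add: bit_cancel del: add_bit_eq_xor)
  have "g a 0 c = g a 0 c + g a 0 c" using gl(2)[of _ 0 0] by simp
  then show "g a 0 c = 0" by (simp add: bit_cancel del: add_bit_eq_xor)
  have "g a b 0 = g a b 0 + g a b 0" using gl(3)[of _ _ 0 0] by simp
  then show "g a b 0 = 0" by (simp add: bit_cancel del: add_bit_eq_xor)
qed

lemma th_exp: "th x y = g x x y + g x y y" unfolding th_def by (simp add: gl)
lemma th_comm: "th x y = th y x" unfolding th_def using sym[rule_format, of x y] by (simp add: add.commute)
lemma th_sum0: "th x y + th y x = 0" by (simp only: th_comm[of x y] bit_cancel)

lemmas N = gl g0 bit_cancel th_exp K add.assoc add.commute add.left_commute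

abbreviation M where "M \<equiv> ext_mult th"
lemma M_simp: "M (x,a) (y,b) = (x+y, a+b+th x y)" by (simp add: ext_mult_def)

definition li where "li p q = (fst q + fst p, snd q + snd p + th (fst p) (fst q + fst p))"

lemma Lt_li: "Lt M p \<circ> li p = id" "li p \<circ> Lt M p = id"
  by (auto simp: fun_eq_iff Lt_def li_def ext_mult_def N simp del: add_bit_eq_xor)

lemma inv_Lt: "inv (Lt M p) = li p" using Lt_li by (rule inv_unique_comp)
lemma bij_Lt: "bij (Lt M p)" by (rule o_bij[OF Lt_li(2) Lt_li(1)])
lemma Rt_Lt: "Rt M p = Lt M p"
  by (auto simp: fun_eq_iff Lt_def Rt_def ext_mult_def add.commute th_comm)
lemma M_comm: "M p q = M q p"
  by (auto simp: ext_mult_def add.commute th_comm)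

lemma kk: "(y + (x + z)) + (y + x) = (z::'k)" by (simp add: N)
lemma bbb: "b + (a + c + th x z) + th y (x + z) + (b + a + th y x) + th (y + x) z = c + (g y z x + g x y z)"
  apply (subst bit_eq_sum) by (simp add: N del: add_bit_eq_xor)

lemma Lxy_val: "Lxy M (x,a) (y,b) (z,c) = (z, c + (g y z x + g x y z))"
proof -
  have "Lxy M (x,a) (y,b) (z,c) = li (y+x, b+a+th y x) (y+(x+z), b+(a+c+th x z)+th y (x+z))"
    unfolding Lxy_def inv_Lt by (simp add: Lt_def ext_mult_def del: add_bit_eq_xor)
  also have "\<dots> = (z, b + (a + c + th x z) + th y (x + z) + (b + a + th y x) + th (y + x) z)"
    by (simp only: li_def kk fst_conv snd_conv)
  also have "\<dots> = (z, c + (g y z x + g x y z))" by (simp only: bbb)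
  finally show ?thesis .
qed

lemma Lxy_auto: "automorphism M (Lxy M u v)"
proof -
  have "bij (Lxy M u v)" unfolding Lxy_def inv_Lt[symmetric]
    by (intro bij_comp bij_Lt bij_imp_bij_inv)
  moreover have "Lxy M u v (M w1 w2) = M (Lxy M u v w1) (Lxy M u v w2)" for w1 w2
  proof -
    obtain x a y b z1 c1 z2 c2 where e: "u = (x,a)" "v = (y,b)" "w1 = (z1,c1)" "w2 = (z2,c2)"
      by (cases u; cases v; cases w1; cases w2) auto
    have "c1 + c2 + th z1 z2 + (g y (z1 + z2) x + g x y (z1 + z2)) =
          c1 + (g y z1 x + g x y z1) + (c2 + (g y z2 x + g x y z2)) + th z1 z2"
      apply (subst bit_eq_sum) by (simp add: gl bit_cancel ac_simps del: add_bit_eq_xor)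
    then show ?thesis unfolding e by (simp only: ext_mult_def fst_conv snd_conv Lxy_val)
  qed
  ultimately show ?thesis by (simp add: automorphism_def)
qed

lemma Rxy_Lxy: "Rxy M u v = Lxy M u v"
  unfolding Rxy_def Lxy_def Rt_Lt by (simp add: M_comm)
lemma Tx_id: "Tx M u = id"
  unfolding Tx_def Rt_Lt inv_Lt using Lt_li(2) .

lemma inner_auto: "f \<in> inner_mappings M \<Longrightarrow> automorphism M f"
proof (induction rule: inner_mappings.induct)
  case im_id show ?case by (rule auto_id)
next case (im_L x y) show ?case by (rule Lxy_auto)
next case (im_R x y) show ?case unfolding Rxy_Lxy by (rule Lxy_auto)
next case (im_T x) show ?case unfolding Tx_id by (rule auto_id)
next case (im_comp f h) show ?case by (rule auto_comp[OF im_comp.IH])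
next case (im_inv f) show ?case by (rule auto_inv[OF im_inv.IH])
qed

lemma nuc: "th x y + th (x+y) z = th y z + th x (y+z) \<longleftrightarrow> g y x z = g x z y"
  apply (subst bit_eq_sum) apply (subst (2) bit_eq_sum)
  apply (simp add: N del: add_bit_eq_xor)
  done

lemma main:
  "loop M (0, 0) \<and> commutative_op M \<and>
         A_loop M (0, 0) \<and> exponent2 M (0, 0) \<and>
         (\<forall>y b. (y, b) \<in> middle_nucleus M \<longleftrightarrow> (\<forall>x z. g y x z = g x z y))"
proof -
  have l: "loop M (0,0)"
    unfolding loop_def using bij_Lt[unfolded Lt_def] Rt_Lt[unfolded Lt_def Rt_def]
    by (simp add: ext_mult_def N del: add_bit_eq_xor)
  have c: "commutative_op M" using M_comm by (simp add: commutative_op_def)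
  have a: "A_loop M (0,0)" using l inner_auto by (simp add: A_loop_def)
  have e: "exponent2 M (0,0)" by (simp add: exponent2_def ext_mult_def N del: add_bit_eq_xor)
  have n: "(y, b) \<in> middle_nucleus M \<longleftrightarrow> (\<forall>x z. g y x z = g x z y)" for y b
  proof -
    have "(y, b) \<in> middle_nucleus M \<longleftrightarrow> (\<forall>x z. th x y + th (x+y) z = th y z + th x (y+z))"
      by (auto simp: middle_nucleus_def ext_mult_def ac_simps bit_eq_sum[of "_ + _ + _"]  simp del: add_bit_eq_xor)
    then show ?thesis using nuc by simp
  qed
  show ?thesis using l c a e n by blast
qed
end

theorem proposition4p3:
  fixes g :: "'k::ab_group_add \<Rightarrow> 'k \<Rightarrow> 'k \<Rightarrow> bit"
  assumes elem2: "\<forall>x::'k. x + x = 0"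
    and tri: "trilinear g"
    and sym: "\<forall>x y. g x (x + y) y = g y (x + y) x"
  defines "\<theta> \<equiv> (\<lambda>x y. g x (x + y) y)"
  shows "loop (ext_mult \<theta>) (0, 0) \<and> commutative_op (ext_mult \<theta>) \<and>
         A_loop (ext_mult \<theta>) (0, 0) \<and> exponent2 (ext_mult \<theta>) (0, 0) \<and>
         (\<forall>y b. (y, b) \<in> middle_nucleus (ext_mult \<theta>) \<longleftrightarrow> (\<forall>x z. g y x z = g x z y))"
proof -
  interpret trisetup g using assms by unfold_locales auto
  have "\<theta> = th" unfolding \<theta>_def by (simp add: fun_eq_iff th_def)
  then show ?thesis using main by simp
qed
end
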